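(* For every join query $\mathcal R$ and every degree configuration $c\in\mathcal C_2$, $$\mathsf{MO}(\mathcal R(c))\le \mathsf{DBP}(\mathcal R(c),2)+|C|\log_{\mathrm{IN}}2,$$ where $C$ is a cover attaining the minimum in the definition of $\mathsf{DBP}(\mathcal R(c),2)$.
   Context: A join query consists of a finite set $\mathcal R$ of relations; each $R$ is a finite set of tuples over attribute set $\mathsf{attr}(R)$; $\mathcal A=\bigcup_R\mathsf{attr}(R)$. $\mathrm{IN}=\sum_{R\in\mathcal R}|R|\ge2$ (input size of the original query), $\log=\log_{\mathrm{IN}}$. For a relation $S$, $A\subseteq\mathsf{attr}(S)$, $v\in\pi_A(S)$: $\mathsf{deg}(v,S,A)=|\{t\in S:\pi_A(t)=v\}|$; $d_{S,A}=\max_{v\in\pi_A(S)}\mathsf{deg}(v,S,A)$ for $A\ne\emptyset$, $d_{S,\emptyset}=|S|$; for $A\subseteq B\subseteq\mathsf{attr}(S)$, $d(A,B,S)=\log d_{\pi_B(S),A}$. Degree configurations: buckets $B_l=[2^l,2^{l+1})$, $l\in\mathbb N$, ordered by index; $c\in\mathcal C_2$ maps each $(R,A)$, $A\subseteq\mathsf{attr}(R)$, to a bucket with $A'\subseteq A\Rightarrow c(R,A)\le c(R,A')$, $c(R,\mathsf{attr}(R))=B_0$, $c(R,\emptyset)=B_{\lfloor\log_2|R|\rfloor}$; $R(c)=\{t\in R:\forall A\subseteq\mathsf{attr}(R),\ \mathsf{deg}(\pi_A(t),R,A)\in c(R,A)\}$, $\mathcal R(c)=\{R(c)\}$ (assumed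 nonempty). MO: for a set $\mathcal S$ of relations, variables $s_F$ ($F\subseteq\mathcal A$), constraints $s_\emptyset=0$; $s_F\le s_{F'}$ for $F\subseteq F'$; $s_{B\cup E}\le s_{A\cup E}+d(A,B,S)$ for all $S\in\mathcal S$, $E\subseteq\mathcal A$, $A\subseteq B\subseteq\mathsf{attr}(S)$; $\mathsf{MO}(\mathcal S)=\max s_{\mathcal A}$. DBP: a cover is a set $C$ of pairs $(S,A)$, $S\in\mathcal S$, $A\subseteq\mathsf{attr}(S)$, with $\bigcup_{(S,A)\in C}A=\mathcal A$; $O_{C,L}$ is the optimal value of minimizing $\sum_{a\in\mathcal A}v_a$ over real $v_a\ge0$ with $\sum_{a\in A'}v_a\ge\log(d_{\pi_A(S),A\setminus A'}/L)$ for all $(S,A)\in C$, $A'\subseteq A$; $\mathsf{DBP}(\mathcal S,L)=\min_C O_{C,L}$. *)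

theory Defs
  imports Complex_Main
begin

text \<open>A relation: its attribute set together with its set of tuples; a tuple is a
  finite map from attributes to values whose domain is the attribute set.\<close>
type_synonym ('a, 'v) rel = "'a set \<times> ('a \<rightharpoonup> 'v) set"

definition attr :: "('a, 'v) rel \<Rightarrow> 'a set" where "attr R = fst R"
definition tup :: "('a, 'v) rel \<Rightarrow> ('a \<rightharpoonup> 'v) set" where "tup R = snd R"

definition join_query :: "('a, 'v) rel set \<Rightarrow> bool" where
  "join_query Q \<longleftrightarrow> finite Q \<and>
     (\<forall>R\<in>Q. finite (attr R) \<and> finite (tup R) \<and> (\<forall>t\<in>tup R. dom t = attr R))"

definition IN :: "('a, 'v) rel set \<Rightarrow> nat" where
  "IN Q = (\<Sum>R\<in>Q. card (tup R))"

definition attrs :: "('a, 'v) rel set \<Rightarrow> 'a set" where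
  "attrs Q = \<Union> (attr ` Q)"

definition proj_rel :: "'a set \<Rightarrow> ('a, 'v) rel \<Rightarrow> ('a, 'v) rel" where
  "proj_rel B S = (B, (\<lambda>t. t |` B) ` tup S)"

definition deg :: "('a \<rightharpoonup> 'v) \<Rightarrow> ('a, 'v) rel \<Rightarrow> 'a set \<Rightarrow> nat" where
  "deg v S A = card {t \<in> tup S. t |` A = v}"

definition maxdeg :: "('a, 'v) rel \<Rightarrow> 'a set \<Rightarrow> nat" where
  "maxdeg S A = (if A = {} then card (tup S)
                 else Max ((\<lambda>v. deg v S A) ` ((\<lambda>t. t |` A) ` tup S)))"

definition dlog :: "real \<Rightarrow> 'a set \<Rightarrow> 'a set \<Rightarrow> ('a, 'v) rel \<Rightarrow> real" where
  "dlog N A B S = log N (real (maxdeg (proj_rel B S) A))"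

definition bucket :: "nat \<Rightarrow> nat set" where
  "bucket l = {x. 2 ^ l \<le> x \<and> x < 2 ^ (l + 1)}"

text \<open>Degree configurations \<open>c \<in> C_2\<close>, buckets represented by their index.\<close>
definition degree_config :: "('a, 'v) rel set \<Rightarrow> (('a, 'v) rel \<Rightarrow> 'a set \<Rightarrow> nat) \<Rightarrow> bool" where
  "degree_config Q c \<longleftrightarrow> (\<forall>R\<in>Q.
      (\<forall>A A'. A \<subseteq> attr R \<longrightarrow> A' \<subseteq> A \<longrightarrow> c R A \<le> c R A') \<and>
      c R (attr R) = 0 \<and>
      c R {} = nat \<lfloor>log 2 (real (card (tup R)))\<rfloor>)"

definition restrict_conf :: "(('a, 'v) rel \<Rightarrow> 'a set \<Rightarrow> nat) \<Rightarrow> ('a, 'v) rel \<Rightarrow> ('a, 'v) rel" where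
  "restrict_conf c R = (attr R,
     {t \<in> tup R. \<forall>A. A \<subseteq> attr R \<longrightarrow> deg (t |` A) R A \<in> bucket (c R A)})"

definition query_conf :: "('a, 'v) rel set \<Rightarrow> (('a, 'v) rel \<Rightarrow> 'a set \<Rightarrow> nat) \<Rightarrow> ('a, 'v) rel set" where
  "query_conf Q c = restrict_conf c ` Q"

text \<open>MO: feasibility and optimal value (the LP is bounded, so the supremum is the max).\<close>
definition mo_feasible :: "real \<Rightarrow> ('a, 'v) rel set \<Rightarrow> ('a set \<Rightarrow> real) \<Rightarrow> bool" where
  "mo_feasible N S s \<longleftrightarrow>
     s {} = 0 \<and>
     (\<forall>F F'. F \<subseteq> F' \<longrightarrow> F' \<subseteq> attrs S \<longrightarrow> s F \<le> s F') \<and>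
     (\<forall>R\<in>S. \<forall>E A B. E \<subseteq> attrs S \<longrightarrow> A \<subseteq> B \<longrightarrow> B \<subseteq> attr R \<longrightarrow>
         s (B \<union> E) \<le> s (A \<union> E) + dlog N A B R)"

definition MO :: "real \<Rightarrow> ('a, 'v) rel set \<Rightarrow> real" where
  "MO N S = Sup {s (attrs S) | s. mo_feasible N S s}"

definition is_cover :: "('a, 'v) rel set \<Rightarrow> (('a, 'v) rel \<times> 'a set) set \<Rightarrow> bool" where
  "is_cover S C \<longleftrightarrow> (\<forall>(R, A)\<in>C. R \<in> S \<and> A \<subseteq> attr R) \<and> \<Union> (snd ` C) = attrs S"

definition O_val :: "real \<Rightarrow> ('a, 'v) rel set \<Rightarrow> (('a, 'v) rel \<times> 'a set) set \<Rightarrow> real \<Rightarrow> real" where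
  "O_val N S C L = Inf {(\<Sum>a\<in>attrs S. v a) | v.
      (\<forall>a\<in>attrs S. 0 \<le> v a) \<and>
      (\<forall>(R, A)\<in>C. \<forall>A'. A' \<subseteq> A \<longrightarrow>
          (\<Sum>a\<in>A'. v a) \<ge> log N (real (maxdeg (proj_rel A R) (A - A')) / L))}"

definition DBP :: "real \<Rightarrow> ('a, 'v) rel set \<Rightarrow> real \<Rightarrow> real" where
  "DBP N S L = Inf {O_val N S C L | C. is_cover S C}"

end

theory Submission
  imports Defs
begin

lemma chain:
  fixes N :: real
  assumes N: "1 < N" and feas: "mo_feasible N S s" and cov: "is_cover S C"
    and finattr: "\<forall>R\<in>S. finite (attr R)"
    and v0: "\<forall>a\<in>attrs S. 0 \<le> v a"
    and vc: "\<forall>(R, A)\<in>C. \<forall>A'. A' \<subseteq> A \<longrightarrow>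
          (\<Sum>a\<in>A'. v a) \<ge> log N (real (maxdeg (proj_rel A R) (A - A')) / 2)"
    and finD: "finite D" and DC: "D \<subseteq> C"
  shows "s (\<Union>(snd ` D)) \<le> (\<Sum>a\<in>\<Union>(snd ` D). v a) + real (card D) * log N 2"
  using finD DC
proof (induction D rule: finite_induct)
  case empty
  then show ?case using feas by (simp add: mo_feasible_def)
next
  case (insert x F)
  obtain R A where x: "x = (R, A)" by (cases x)
  have RA: "(R, A) \<in> C" using insert x by auto
  then have R: "R \<in> S" "A \<subseteq> attr R" using cov unfolding is_cover_def by auto
  define E where "E = \<Union>(snd ` F)"
  have "E \<subseteq> \<Union>(snd ` C)" using insert.prems unfolding E_def by auto
  then have Esub: "E \<subseteq> attrs S" using cov unfolding is_cover_def by simp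
  have "A \<in> snd ` C" using RA by (metis image_eqI snd_conv)
  then have "A \<subseteq> \<Union>(snd ` C)" by (rule Union_upper)
  then have Asub: "A \<subseteq> attrs S" using cov unfolding is_cover_def by simp
  have finA: "finite A" using R finattr by (meson finite_subset)
  have finE: "finite E" unfolding E_def
  proof (rule finite_Union)
    show "finite (snd ` F)" using insert by simp
    show "\<And>M. M \<in> snd ` F \<Longrightarrow> finite M"
    proof -
      fix M assume "M \<in> snd ` F"
      then obtain R' where "(R', M) \<in> C" using insert.prems by force
      then have "R' \<in> S \<and> M \<subseteq> attr R'" using cov unfolding is_cover_def by blast
      then show "finite M" using finattr by (meson finite_subset)
    qed
  qed
  have IH: "s E \<le> (\<Sum>a\<in>E. v a) + real (card F) * log N 2" using insert E_def by auto
  have step: "s (A \<union> E) \<le> s ((A \<inter> E) \<union> E) + dlog N (A \<inter> E) A R"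
  proof -
    have H: "\<forall>R\<in>S. \<forall>E A B. E \<subseteq> attrs S \<longrightarrow> A \<subseteq> B \<longrightarrow> B \<subseteq> attr R \<longrightarrow>
         s (B \<union> E) \<le> s (A \<union> E) + dlog N A B R" using feas unfolding mo_feasible_def
      by (rule conjunct2[THEN conjunct2])
    show ?thesis by (rule bspec[OF H R(1), rule_format]) (use Esub R(2) in auto)
  qed
  have e1: "(A \<inter> E) \<union> E = E" by auto
  define m where "m = real (maxdeg (proj_rel A R) (A \<inter> E))"
  have e2: "A - (A - E) = A \<inter> E" by auto
  have vA: "(\<Sum>a\<in>A - E. v a) \<ge> log N (m / 2)"
  proof -
    have "\<forall>A'. A' \<subseteq> A \<longrightarrow>
          (\<Sum>a\<in>A'. v a) \<ge> log N (real (maxdeg (proj_rel A R) (A - A')) / 2)"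
      using vc RA by blast
    then have "(\<Sum>a\<in>A - E. v a) \<ge> log N (real (maxdeg (proj_rel A R) (A - (A - E))) / 2)"
      by blast
    then show ?thesis unfolding e2 m_def .
  qed
  have sA0: "(\<Sum>a\<in>A - E. v a) \<ge> 0" using v0 Asub by (intro sum_nonneg) auto
  have l2: "log N 2 > 0" using N by simp
  have lm: "log N m \<le> (\<Sum>a\<in>A - E. v a) + log N 2"
  proof (cases "m = 0")
    case True then show ?thesis using sA0 l2 by (simp add: log_def)
  next
    case False
    then have "m > 0" unfolding m_def by simp
    then have "log N (m / 2) = log N m - log N 2" by (simp add: log_divide_pos)
    then show ?thesis using vA by simp
  qed
  have su: "(\<Sum>a\<in>A \<union> E. v a) = (\<Sum>a\<in>E. v a) + (\<Sum>a\<in>A - E. v a)"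
  proof -
    have "A \<union> E = E \<union> (A - E)" by auto
    moreover have "(\<Sum>a\<in>E \<union> (A - E). v a) = (\<Sum>a\<in>E. v a) + (\<Sum>a\<in>A - E. v a)"
      by (rule sum.union_disjoint) (use finA finE in auto)
    ultimately show ?thesis by metis
  qed
  have U: "\<Union>(snd ` insert x F) = A \<union> E" using x E_def by auto
  have cd: "card (insert x F) = Suc (card F)" using insert by simp
  have "s (A \<union> E) \<le> s E + log N m" using step e1 unfolding dlog_def m_def by simp
  then show ?case unfolding U cd using IH lm su by (simp add: algebra_simps)
qed

lemma log_nat_nonneg:
  fixes N :: real assumes "1 < N" shows "0 \<le> log N (real n)"
proof (cases "n = 0")
  case True then show ?thesis by (simp add: log_def)
next
  case False then show ?thesis using assms by (simp add: zero_le_log_cancel_iff)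
qed

lemma maxdeg_self_le:
  assumes fin: "finite (tup R)" and ne: "tup R \<noteq> {}"
  shows "maxdeg (proj_rel A R) A \<le> 1"
proof (cases "A = {}")
  case True
  have "tup (proj_rel A R) \<subseteq> {Map.empty}" using True
    unfolding proj_rel_def tup_def by auto
  then have "card (tup (proj_rel A R)) \<le> card {Map.empty :: 'a \<rightharpoonup> 'b}"
    by (intro card_mono) auto
  then show ?thesis using True unfolding maxdeg_def by simp
next
  case False
  have T: "tup (proj_rel A R) = (\<lambda>t. t |` A) ` tup R" unfolding proj_rel_def tup_def by simp
  have d: "deg v (proj_rel A R) A \<le> 1" for v
  proof -
    have "{t \<in> tup (proj_rel A R). t |` A = v} \<subseteq> {v}" unfolding T by auto
    then have "card {t \<in> tup (proj_rel A R). t |` A = v} \<le> card {v}" by (intro card_mono) auto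
    then show ?thesis unfolding deg_def by simp
  qed
  have "finite ((\<lambda>v. deg v (proj_rel A R) A) ` ((\<lambda>t. t |` A) ` tup (proj_rel A R)))"
    using fin unfolding T by simp
  moreover have "((\<lambda>v. deg v (proj_rel A R) A) ` ((\<lambda>t. t |` A) ` tup (proj_rel A R))) \<noteq> {}"
    using ne unfolding T by simp
  ultimately show ?thesis using False d unfolding maxdeg_def by (simp add: Max_le_iff)
qed

lemma main_generic:
  fixes N :: real and S :: "('a, 'v) rel set"
  assumes N: "1 < N" and finS: "finite S"
    and finattr: "\<forall>R\<in>S. finite (attr R)"
    and tupok: "\<forall>R\<in>S. finite (tup R) \<and> tup R \<noteq> {}"
    and cov: "is_cover S C"
  shows "MO N S \<le> O_val N S C 2 + real (card C) * log N 2"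
proof -
  have CS: "C \<subseteq> Sigma S (\<lambda>R. Pow (attr R))" using cov unfolding is_cover_def by auto
  have finC: "finite C"
    by (rule finite_subset[OF CS]) (use finS finattr in auto)
  have finsnd: "finite A" if "(R, A) \<in> C" for R A
  proof -
    have "R \<in> S" "A \<subseteq> attr R" using that CS by auto
    then show ?thesis using finattr by (meson finite_subset)
  qed
  define T where "T (x :: ('a, 'v) rel \<times> 'a set) A' = log N (real (maxdeg (proj_rel (snd x) (fst x)) (snd x - A')) / 2)" for x A'
  define M where "M = (\<Sum>x\<in>C. \<Sum>A'\<in>Pow (snd x). \<bar>T x A'\<bar>)"
  have M0: "0 \<le> M" unfolding M_def by (intro sum_nonneg) auto
  have TM: "T x A' \<le> M" if "x \<in> C" "A' \<subseteq> snd x" for x A'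
  proof -
    have fx: "finite (snd x)" using that(1) finsnd by (cases x) auto
    have "T x A' \<le> \<bar>T x A'\<bar>" by simp
    also have "\<dots> \<le> (\<Sum>A'\<in>Pow (snd x). \<bar>T x A'\<bar>)"
      by (rule member_le_sum) (use that fx in auto)
    also have "\<dots> \<le> M" unfolding M_def
      by (rule member_le_sum[where f = "\<lambda>x. \<Sum>A'\<in>Pow (snd x). \<bar>T x A'\<bar>"])
         (use that finC in \<open>auto intro: sum_nonneg\<close>)
    finally show ?thesis .
  qed
  define V where "V = {(\<Sum>a\<in>attrs S. v a) | v.
      (\<forall>a\<in>attrs S. 0 \<le> v a) \<and>
      (\<forall>(R, A)\<in>C. \<forall>A'. A' \<subseteq> A \<longrightarrow>
          (\<Sum>a\<in>A'. v a) \<ge> log N (real (maxdeg (proj_rel A R) (A - A')) / 2))}"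
  have Vne: "V \<noteq> {}"
  proof -
    have "(\<Sum>a\<in>A'. (\<lambda>_. M) a) \<ge> log N (real (maxdeg (proj_rel A R) (A - A')) / 2)"
      if RA: "(R, A) \<in> C" and A': "A' \<subseteq> A" for R A A'
    proof (cases "A' = {}")
      case True
      have "R \<in> S" using RA cov unfolding is_cover_def by auto
      then have "maxdeg (proj_rel A R) A \<le> 1" using tupok maxdeg_self_le by blast
      then consider "maxdeg (proj_rel A R) A = 0" | "maxdeg (proj_rel A R) A = 1" by linarith
      then show ?thesis
      proof cases
        case 1 then show ?thesis using True by (simp add: log_def)
      next
        case 2 then show ?thesis using True N by simp
      qed
    next
      case False
      have "finite A" using RA finsnd by blast
      then have "finite A'" using A' by (rule finite_subset[rotated])
      then have "card A' \<ge> 1" using False by (simp add: Suc_le_eq card_gt_0_iff)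
      then have "M \<le> real (card A') * M" using M0 by (simp add: mult_le_cancel_right1)
      moreover have "log N (real (maxdeg (proj_rel A R) (A - A')) / 2) \<le> M"
        using TM[OF RA] A' unfolding T_def by simp
      ultimately show ?thesis by simp
    qed
    then have "(\<Sum>a\<in>attrs S. (\<lambda>_. M) a) \<in> V" unfolding V_def using M0 by blast
    then show ?thesis by blast
  qed
  have OV: "O_val N S C 2 = Inf V" unfolding O_val_def V_def by simp
  define W where "W = {s (attrs S) | s. mo_feasible N S s}"
  have Wne: "W \<noteq> {}"
  proof -
    have "mo_feasible N S (\<lambda>_. 0)" unfolding mo_feasible_def dlog_def
      using log_nat_nonneg[OF N] by auto
    then show ?thesis unfolding W_def by blast
  qed
  have "MO N S = Sup W" unfolding MO_def W_def by simp
  also have "\<dots> \<le> O_val N S C 2 + real (card C) * log N 2"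
  proof (rule cSup_least[OF Wne])
    fix w assume "w \<in> W"
    then obtain s where w: "w = s (attrs S)" and feas: "mo_feasible N S s" unfolding W_def by blast
    have "w - real (card C) * log N 2 \<le> Inf V"
    proof (rule cInf_greatest[OF Vne])
      fix y assume "y \<in> V"
      then obtain v where y: "y = (\<Sum>a\<in>attrs S. v a)" and v0: "\<forall>a\<in>attrs S. 0 \<le> v a"
        and vc: "\<forall>(R, A)\<in>C. \<forall>A'. A' \<subseteq> A \<longrightarrow>
          (\<Sum>a\<in>A'. v a) \<ge> log N (real (maxdeg (proj_rel A R) (A - A')) / 2)"
        unfolding V_def by blast
      have "s (\<Union>(snd ` C)) \<le> (\<Sum>a\<in>\<Union>(snd ` C). v a) + real (card C) * log N 2"
        by (rule chain[OF N feas cov finattr v0 vc finC subset_refl])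
      moreover have "\<Union>(snd ` C) = attrs S" using cov unfolding is_cover_def by simp
      ultimately show "w - real (card C) * log N 2 \<le> y" using w y by simp
    qed
    then show "w \<le> O_val N S C 2 + real (card C) * log N 2" using OV by simp
  qed
  finally show ?thesis .
qed

theorem theorem4p3:
  fixes Q :: "('a, 'v) rel set"
    and c :: "('a, 'v) rel \<Rightarrow> 'a set \<Rightarrow> nat"
    and C :: "(('a, 'v) rel \<times> 'a set) set"
  assumes "join_query Q"
    and "IN Q \<ge> 2"
    and "degree_config Q c"
    and "\<forall>R\<in>Q. tup (restrict_conf c R) \<noteq> {}"
    and "is_cover (query_conf Q c) C"
    and "O_val (real (IN Q)) (query_conf Q c) C 2 = DBP (real (IN Q)) (query_conf Q c) 2"
  shows "MO (real (IN Q)) (query_conf Q c)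
           \<le> DBP (real (IN Q)) (query_conf Q c) 2 + real (card C) * log (real (IN Q)) 2"
proof -
  have N: "1 < real (IN Q)" using assms(2) by simp
  have finS: "finite (query_conf Q c)" using assms(1) unfolding join_query_def query_conf_def by simp
  have at: "attr (restrict_conf c R) = attr R" for R unfolding restrict_conf_def attr_def by simp
  have tp: "tup (restrict_conf c R) \<subseteq> tup R" for R unfolding restrict_conf_def tup_def by auto
  have finattr: "\<forall>R\<in>query_conf Q c. finite (attr R)"
    using assms(1) unfolding join_query_def query_conf_def by (auto simp: at)
  have tupok: "\<forall>R\<in>query_conf Q c. finite (tup R) \<and> tup R \<noteq> {}"
  proof
    fix R assume "R \<in> query_conf Q c"
    then obtain R0 where R0: "R0 \<in> Q" "R = restrict_conf c R0" unfolding query_conf_def by blast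
    have "finite (tup R0)" using assms(1) R0(1) unfolding join_query_def by blast
    then show "finite (tup R) \<and> tup R \<noteq> {}" using R0 assms(4) tp finite_subset by metis
  qed
  show ?thesis using main_generic[OF N finS finattr tupok assms(5)] assms(6) by simp
qed

end
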